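(* Let $v$ be a non-leaf node of a draft tree with $m$ children $\mathcal{C}(v)=\{u_1,\dots,u_m\}$ generated by Greedy sampling, and let $\tilde p_v\in[0,1]$. Call an allocation at $v$ any rule assigning to each possible value $s$ of the sampled child $u_m$ numbers $q(t\mid s)\ge 0$, $t\in\Sigma$, with $\sum_{t\in\Sigma}q(t\mid s)\le 1$, that is locally lossless, i.e. $\sum_{s\in\Sigma}\mathcal{M}_s^\neg(s\mid v)\,q(t\mid s)=\tilde p_v\mathcal{M}_b(t\mid v)$ for all $t\in\Sigma$. Its conditional acceptance rate is $\mathbb{E}_{u_m\sim\mathcal{M}_s^\neg(\cdot\mid v)}\big[\sum_{j=1}^m q(u_j\mid u_m)\big]$. Then the UniVer allocation (the numbers $p_v(\cdot)$ defined in the context, viewed as functions of $u_m$) achieves the maximum conditional acceptance rate among all locally lossless allocations at $v$, and this maximum equals $$\alpha^*_{\rm UniVer}=\sum_{u\in H_v}\tilde p_v\mathcal{M}_b(u\mid v)+\sum_{u\in\Sigma}\min\{\tilde p_v\mathcal{M}_b(u\mid v),\,\mathcal{M}_s^\neg(u\mid v)\}.$$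
   Context: Let $\Sigma$ be a finite vocabulary, and let $\mathcal{M}_b(\cdot\mid v)$ (target) and $\mathcal{M}_s(\cdot\mid v)$ (draft) be probability distributions on $\Sigma$ conditioned on the context $v$. Greedy sampling of the $m$ children of $v$: $u_1,\dots,u_{m-1}$ are the $m-1$ most probable tokens under $\mathcal{M}_s(\cdot\mid v)$ (set $H_v=\{u_1,\dots,u_{m-1}\}$, i.e. $H_v$ is the set of the top-$(m-1)$ tokens of $\mathcal{M}_s(\cdot\mid v)$, ties broken by a fixed rule), and $u_m$ is drawn from the residual distribution $\mathcal{M}_s^\neg(\cdot\mid v)$, where $\mathcal{M}_s^\neg(x\mid v)=\mathcal{M}_s(x\mid v)/\sum_{y\notin H_v}\mathcal{M}_s(y\mid v)$ for $x\notin H_v$ and $0$ for $x\in H_v$. $[x]_+=\max\{x,0\}$. UniVer allocation at $v$ with prefix acceptance probability $\tilde p_v$: $Z_v=1-\tilde p_v+\sum_{x\in\Sigma}[\tilde p_v\mathcal{M}_b(x\mid v)-\mathcal{M}_s^\neg(x\mid v)]_+$; $p_v(u_m)=\min\{1,\tilde p_v\mathcal{M}_b(u_m\mid v)/\mathcal{M}_s^\neg(u_m\mid v)\}$; for every $u\in\Sigma\setminus\{u_m\}$, $p_v(u)=[\tilde p_v\mathcal{M}_b(u\mid v)-\mathcal{M}_s^\neg(u\mid v)]_+\,(1-p_v(u_m))/Z_v$. *)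

theory Defs
  imports Complex_Main
begin

definition is_dist :: "('a::finite \<Rightarrow> real) \<Rightarrow> bool" where
  "is_dist P \<longleftrightarrow> (\<forall>x. 0 \<le> P x) \<and> (\<Sum>x\<in>UNIV. P x) = 1"

text \<open>H is a set of top-(m-1) tokens of the draft distribution Ms (any tie-breaking).\<close>
definition is_top_set :: "('a::finite \<Rightarrow> real) \<Rightarrow> nat \<Rightarrow> 'a set \<Rightarrow> bool" where
  "is_top_set Ms m H \<longleftrightarrow> card H = m - 1 \<and> (\<forall>x\<in>H. \<forall>y. y \<notin> H \<longrightarrow> Ms y \<le> Ms x)"

definition resid :: "('a::finite \<Rightarrow> real) \<Rightarrow> 'a set \<Rightarrow> 'a \<Rightarrow> real" where
  "resid Ms H x = (if x \<in> H then 0 else Ms x / (\<Sum>y\<in>UNIV - H. Ms y))"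

definition pos_part :: "real \<Rightarrow> real" where
  "pos_part x = max x 0"

definition univer_Z :: "real \<Rightarrow> ('a::finite \<Rightarrow> real) \<Rightarrow> ('a \<Rightarrow> real) \<Rightarrow> 'a set \<Rightarrow> real" where
  "univer_Z pt Mb Ms H = 1 - pt + (\<Sum>x\<in>UNIV. pos_part (pt * Mb x - resid Ms H x))"

text \<open>UniVer allocation: univer_alloc pt Mb Ms H s t = p_v(t) when the sampled child u_m = s.\<close>
definition univer_alloc :: "real \<Rightarrow> ('a::finite \<Rightarrow> real) \<Rightarrow> ('a \<Rightarrow> real) \<Rightarrow> 'a set \<Rightarrow> 'a \<Rightarrow> 'a \<Rightarrow> real" where
  "univer_alloc pt Mb Ms H s t =
     (let pm = min 1 (pt * Mb s / resid Ms H s) in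
      if t = s then pm
      else pos_part (pt * Mb t - resid Ms H t) * (1 - pm) / univer_Z pt Mb Ms H)"

text \<open>An allocation: q s t = q(t | s), nonnegative, with total mass at most 1 for each s.\<close>
definition is_allocation :: "('a::finite \<Rightarrow> 'a \<Rightarrow> real) \<Rightarrow> bool" where
  "is_allocation q \<longleftrightarrow> (\<forall>s t. 0 \<le> q s t) \<and> (\<forall>s. (\<Sum>t\<in>UNIV. q s t) \<le> 1)"

definition locally_lossless :: "real \<Rightarrow> ('a::finite \<Rightarrow> real) \<Rightarrow> ('a \<Rightarrow> real) \<Rightarrow> 'a set \<Rightarrow> ('a \<Rightarrow> 'a \<Rightarrow> real) \<Rightarrow> bool" where
  "locally_lossless pt Mb Ms H q \<longleftrightarrow> (\<forall>t. (\<Sum>s\<in>UNIV. resid Ms H s * q s t) = pt * Mb t)"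

text \<open>Conditional acceptance rate: E_{u_m ~ Ms^neg}[ sum_{u in H} q(u|u_m) + q(u_m|u_m) ].\<close>
definition acc_rate :: "('a::finite \<Rightarrow> real) \<Rightarrow> 'a set \<Rightarrow> ('a \<Rightarrow> 'a \<Rightarrow> real) \<Rightarrow> real" where
  "acc_rate Ms H q = (\<Sum>s\<in>UNIV. resid Ms H s * ((\<Sum>u\<in>H. q s u) + q s s))"

definition alpha_star :: "real \<Rightarrow> ('a::finite \<Rightarrow> real) \<Rightarrow> ('a \<Rightarrow> real) \<Rightarrow> 'a set \<Rightarrow> real" where
  "alpha_star pt Mb Ms H = (\<Sum>u\<in>H. pt * Mb u) + (\<Sum>u\<in>UNIV. min (pt * Mb u) (resid Ms H u))"

end

theory Submission
  imports Defs
begin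

theorem theorem5:
  fixes Mb Ms :: "'a::finite \<Rightarrow> real" and H :: "'a set" and m :: nat and pt :: real
  assumes "is_dist Mb" and "is_dist Ms"
    and "m \<ge> 1"
    and "is_top_set Ms m H"
    and "(\<Sum>y\<in>UNIV - H. Ms y) > 0"
    and "0 \<le> pt" and "pt \<le> 1"
  shows "is_allocation (univer_alloc pt Mb Ms H)
     \<and> locally_lossless pt Mb Ms H (univer_alloc pt Mb Ms H)
     \<and> acc_rate Ms H (univer_alloc pt Mb Ms H) = alpha_star pt Mb Ms H
     \<and> (\<forall>q. is_allocation q \<and> locally_lossless pt Mb Ms H q
            \<longrightarrow> acc_rate Ms H q \<le> alpha_star pt Mb Ms H)"
proof -
  define S where "S = (\<Sum>y\<in>UNIV - H. Ms y)"
  define r where "r = resid Ms H"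
  define pm where "pm = (\<lambda>s. min 1 (pt * Mb s / r s))"
  define pos where "pos = (\<lambda>t. pos_part (pt * Mb t - r t))"
  define P where "P = (\<Sum>t\<in>UNIV. pos t)"
  define Z where "Z = univer_Z pt Mb Ms H"
  define q0 where "q0 = univer_alloc pt Mb Ms H"
  have S0: "S > 0" using assms(5) S_def by simp
  have Mb0: "\<And>x. Mb x \<ge> 0" and Mb1: "(\<Sum>x\<in>UNIV. Mb x) = 1" using assms(1) by (auto simp: is_dist_def)
  have Ms0: "\<And>x. Ms x \<ge> 0" using assms(2) by (auto simp: is_dist_def)
  have r_def': "\<And>x. r x = (if x \<in> H then 0 else Ms x / S)"
    by (simp add: r_def resid_def S_def)
  have r0: "\<And>x. r x \<ge> 0" using Ms0 S0 by (simp add: r_def')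
  have rH: "\<And>x. x \<in> H \<Longrightarrow> r x = 0" by (simp add: r_def')
  have sumr: "(\<Sum>x\<in>UNIV. r x) = 1"
  proof -
    have "(\<Sum>x\<in>UNIV. r x) = (\<Sum>x\<in>UNIV - H. r x)"
      by (rule sum.mono_neutral_right) (auto simp: rH)
    also have "\<dots> = (\<Sum>x\<in>UNIV - H. Ms x / S)" by (rule sum.cong) (auto simp: r_def')
    also have "\<dots> = S / S" by (simp add: sum_divide_distrib[symmetric] S_def)
    finally show ?thesis using S0 by simp
  qed
  have pm01: "\<And>s. 0 \<le> pm s \<and> pm s \<le> 1"
    using Mb0 r0 assms(6) by (auto simp: pm_def)
  have rpm: "\<And>s. r s * pm s = min (pt * Mb s) (r s)"
  proof -
    fix s
    show "r s * pm s = min (pt * Mb s) (r s)"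
    proof (cases "r s = 0")
      case True then show ?thesis using Mb0[of s] assms(6) by (simp add: pm_def)
    next
      case False
      then have rp: "r s > 0" using r0[of s] by simp
      show ?thesis
      proof (cases "pt * Mb s / r s \<le> 1")
        case True
        then have "pt * Mb s \<le> r s" using rp by (simp add: divide_le_eq)
        then show ?thesis using True rp by (simp add: pm_def)
      next
        case False
        then have "pt * Mb s > r s" using rp by (simp add: le_divide_eq not_le)
        then show ?thesis using False by (simp add: pm_def)
      qed
    qed
  qed
  have pos0: "\<And>t. pos t \<ge> 0" by (simp add: pos_def pos_part_def)
  have posmin: "\<And>t. pos t + min (pt * Mb t) (r t) = pt * Mb t"
    by (simp add: pos_def pos_part_def)
  have summin: "(\<Sum>t\<in>UNIV. min (pt * Mb t) (r t)) = pt - P"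
  proof -
    have "(\<Sum>t\<in>UNIV. pos t + min (pt * Mb t) (r t)) = pt"
      using Mb1 by (simp add: posmin sum_distrib_left[symmetric])
    then show ?thesis by (simp add: sum.distrib P_def)
  qed
  have Zeq: "Z = 1 - pt + P" by (simp add: Z_def univer_Z_def P_def pos_def r_def)
  have P0: "P \<ge> 0" using pos0 by (simp add: P_def sum_nonneg)
  have Z0: "Z \<ge> P" using Zeq assms(7) by simp
  have sumrpm: "(\<Sum>s\<in>UNIV. r s * (1 - pm s)) = Z"
  proof -
    have "(\<Sum>s\<in>UNIV. r s * (1 - pm s)) = (\<Sum>s\<in>UNIV. r s) - (\<Sum>s\<in>UNIV. r s * pm s)"
      by (simp add: algebra_simps sum_subtractf)
    then show ?thesis using sumr summin rpm Zeq by simp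
  qed
  have posz: "\<And>t. pos t > 0 \<Longrightarrow> r t * (1 - pm t) = 0"
  proof -
    fix t assume "pos t > 0"
    then have "r t < pt * Mb t" by (simp add: pos_def pos_part_def)
    then have "min (pt * Mb t) (r t) = r t" by simp
    then show "r t * (1 - pm t) = 0" using rpm[of t] by (simp add: algebra_simps)
  qed
  have q0eq: "\<And>s t. q0 s t = (if t = s then pm s else pos t * (1 - pm s) / Z)"
    by (simp add: q0_def univer_alloc_def Let_def pm_def pos_def Z_def r_def)
  have A: "is_allocation q0"
    unfolding is_allocation_def
  proof (intro conjI allI)
    fix s t show "0 \<le> q0 s t" using pm01 pos0 Z0 P0 by (simp add: q0eq)
  next
    fix s
    have "(\<Sum>t\<in>UNIV. q0 s t) = pm s + (\<Sum>t\<in>UNIV - {s}. pos t * (1 - pm s) / Z)"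
      by (simp add: sum.remove[of UNIV s] q0eq)
    also have "(\<Sum>t\<in>UNIV - {s}. pos t * (1 - pm s) / Z) \<le> (\<Sum>t\<in>UNIV. pos t * (1 - pm s) / Z)"
      by (rule sum_mono2) (use pos0 pm01 Z0 P0 in auto)
    also have "(\<Sum>t\<in>UNIV. pos t * (1 - pm s) / Z) = P * (1 - pm s) / Z"
      by (simp add: P_def sum_divide_distrib[symmetric] sum_distrib_right[symmetric])
    also have "P * (1 - pm s) / Z \<le> 1 - pm s"
    proof (cases "Z = 0")
      case True then show ?thesis using pm01[of s] by simp
    next
      case False then have "Z > 0" using Z0 P0 by simp
      then show ?thesis using Z0 pm01[of s]
        by (simp add: divide_le_eq mult_right_mono mult.commute)
    qed
    finally show "(\<Sum>t\<in>UNIV. q0 s t) \<le> 1" by simp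
  qed
  have L: "locally_lossless pt Mb Ms H q0"
    unfolding locally_lossless_def r_def[symmetric]
  proof
    fix t
    have "(\<Sum>s\<in>UNIV. r s * q0 s t) = r t * pm t + (\<Sum>s\<in>UNIV - {t}. r s * (pos t * (1 - pm s) / Z))"
      by (simp add: sum.remove[of UNIV t] q0eq)
    also have "(\<Sum>s\<in>UNIV - {t}. r s * (pos t * (1 - pm s) / Z)) = pos t"
    proof (cases "pos t > 0")
      case False then have "pos t = 0" using pos0[of t] by simp
      then show ?thesis by simp
    next
      case True
      have "pos t \<le> P" unfolding P_def by (rule member_le_sum) (use pos0 in auto)
      then have Znz: "Z \<noteq> 0" using Z0 True by simp
      have "(\<Sum>s\<in>UNIV - {t}. r s * (pos t * (1 - pm s) / Z))
          = (\<Sum>s\<in>UNIV. r s * (pos t * (1 - pm s) / Z))"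
        by (rule sum.mono_neutral_left) (use posz[OF True] in auto)
      also have "\<dots> = (pos t / Z) * (\<Sum>s\<in>UNIV. r s * (1 - pm s))"
        by (simp add: sum_distrib_left) (rule sum.cong, simp_all add: field_simps)
      also have "\<dots> = pos t" using sumrpm Znz by simp
      finally show ?thesis .
    qed
    finally show "(\<Sum>s\<in>UNIV. r s * q0 s t) = pt * Mb t" using rpm[of t] posmin[of t] by simp
  qed
  have R: "acc_rate Ms H q0 = alpha_star pt Mb Ms H"
  proof -
    have "acc_rate Ms H q0 = (\<Sum>s\<in>UNIV. r s * (\<Sum>u\<in>H. q0 s u)) + (\<Sum>s\<in>UNIV. r s * q0 s s)"
      by (simp add: acc_rate_def r_def[symmetric] algebra_simps sum.distrib)
    also have "(\<Sum>s\<in>UNIV. r s * (\<Sum>u\<in>H. q0 s u)) = (\<Sum>u\<in>H. \<Sum>s\<in>UNIV. r s * q0 s u)"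
      by (simp add: sum_distrib_left sum.swap[of _ UNIV H])
    also have "\<dots> = (\<Sum>u\<in>H. pt * Mb u)"
      using L by (simp add: locally_lossless_def r_def)
    also have "(\<Sum>s\<in>UNIV. r s * q0 s s) = (\<Sum>u\<in>UNIV. min (pt * Mb u) (r u))"
      by (simp add: q0eq rpm)
    finally show ?thesis by (simp add: alpha_star_def r_def)
  qed
  have U: "\<forall>q. is_allocation q \<and> locally_lossless pt Mb Ms H q
            \<longrightarrow> acc_rate Ms H q \<le> alpha_star pt Mb Ms H"
  proof (intro allI impI)
    fix q assume h: "is_allocation q \<and> locally_lossless pt Mb Ms H q"
    then have q0': "\<And>s t. q s t \<ge> 0" and q1: "\<And>s. (\<Sum>t\<in>UNIV. q s t) \<le> 1"
      and ll: "\<And>t. (\<Sum>s\<in>UNIV. r s * q s t) = pt * Mb t"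
      by (auto simp: is_allocation_def locally_lossless_def r_def)
    have "acc_rate Ms H q = (\<Sum>s\<in>UNIV. r s * (\<Sum>u\<in>H. q s u)) + (\<Sum>s\<in>UNIV. r s * q s s)"
      by (simp add: acc_rate_def r_def[symmetric] algebra_simps sum.distrib)
    also have "(\<Sum>s\<in>UNIV. r s * (\<Sum>u\<in>H. q s u)) = (\<Sum>u\<in>H. \<Sum>s\<in>UNIV. r s * q s u)"
      by (simp add: sum_distrib_left sum.swap[of _ UNIV H])
    also have "\<dots> = (\<Sum>u\<in>H. pt * Mb u)" using ll by simp
    also have "(\<Sum>s\<in>UNIV. r s * q s s) \<le> (\<Sum>u\<in>UNIV. min (pt * Mb u) (r u))"
    proof (rule sum_mono)
      fix s
      have "q s s \<le> (\<Sum>t\<in>UNIV. q s t)"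
        by (rule member_le_sum) (use q0' in auto)
      then have a: "r s * q s s \<le> r s" using q1[of s] r0[of s]
        by (metis mult_left_mono mult.right_neutral order_trans)
      have "r s * q s s \<le> (\<Sum>s'\<in>UNIV. r s' * q s' s)"
        by (rule member_le_sum) (use q0' r0 in auto)
      then show "r s * q s s \<le> min (pt * Mb s) (r s)" using a ll[of s] by simp
    qed
    finally show "acc_rate Ms H q \<le> alpha_star pt Mb Ms H"
      by (simp add: alpha_star_def r_def)
  qed
  show ?thesis using A L R U by (simp add: q0_def)
qed

end
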